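(* Consider Algorithm SS-SQP (described in the context) under the standing assumptions (A1), (A2). For all $k\in\mathbb{N}$, $$\Delta l(x_k,\bar\tau_k,\bar g_k,\bar d_k)\ge\bar\tau_k\max\{\bar d_k^TH_k\bar d_k,0\}+\sigma\|c_k\|_1.$$ Furthermore, if $\bar\tau_k\ne\bar\tau_{k-1}$, then $0<\bar\tau_k\le(1-\epsilon_\tau)\bar\tau_{k-1}$.
   Context: Problem: $\min_{x\in\mathbb{R}^n}f(x)$ s.t. $c(x)=0$ with $f,c$ continuously differentiable, $c:\mathbb{R}^n\to\mathbb{R}^m$, $m\le n$; $c_k=c(x_k)$, $J_k=\nabla c(x_k)^T$. $\Delta l(x,\tau,g,d)=-\tau g^Td+\|c(x)\|_1$. Standing assumption (A1): there is an open convex set $\mathcal{X}$ containing all iterates and trial iterates; $f$ bounded below, $\nabla f$ $L$-Lipschitz and bounded, $c$ bounded, each $\nabla c_i$ Lipschitz and bounded on $\mathcal{X}$; singular values of $\nabla c(x)^T$ bounded away from zero on $\mathcal{X}$. (A2): $H_k$ symmetric, chosen independently of $\bar g_k$, $\|H_k\|\le\kappa_H$, $u^TH_ku\ge\zeta\|u\|^2$ for $u\in\mathrm{Null}(J_k)$, $\kappa_H,\zeta>0$. Algorithm SS-SQP: inputs $x_0$, $\bar\tau_{-1}>0$, $\alpha_{\max}\in(0,1]$, $\alpha_0\in(0,\alpha_{\max}]$, $\epsilon_f\ge0$, $\gamma,\theta,\sigma,\epsilon_\tau\in(0,1)$. At iteration $k$: random gradient estimate $\bar g_k\in\mathbb{R}^n$;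 solve $\begin{bmatrix}H_k & J_k^T\\ J_k&0\end{bmatrix}\begin{bmatrix}\bar d_k\\ \bar y_k\end{bmatrix}=-\begin{bmatrix}\bar g_k\\ c_k\end{bmatrix}$; $\bar\tau_k^{\rm trial}=\infty$ if $\bar g_k^T\bar d_k+\max\{\bar d_k^TH_k\bar d_k,0\}\le0$, else $(1-\sigma)\|c_k\|_1/(\bar g_k^T\bar d_k+\max\{\bar d_k^TH_k\bar d_k,0\})$; $\bar\tau_k=\bar\tau_{k-1}$ if $\bar\tau_{k-1}\le\bar\tau_k^{\rm trial}$, else $\bar\tau_k=\min\{(1-\epsilon_\tau)\bar\tau_{k-1},\bar\tau_k^{\rm trial}\}$; $x_k^+=x_k+\alpha_k\bar d_k$; with objective estimates $\bar f$ and $\bar\phi(x,\tau;\xi)=\tau\bar f(x;\xi)+\|c(x)\|_1$, set $x_{k+1}=x_k^+$, $\alpha_{k+1}=\min\{\alpha_{\max},\alpha_k/\gamma\}$ if $\bar\phi(x_k^+,\bar\tau_k;\xi_k^+)\le\bar\phi(x_k,\bar\tau_k;\xi_k^0)-\alpha_k\theta\Delta l(x_k,\bar\tau_k,\bar g_k,\bar d_k)+2\bar\tau_k\epsilon_f$, else $x_{k+1}=x_k$, $\alpha_{k+1}=\gamma\alpha_k$. *)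

theory Defs
  imports "HOL-Analysis.Analysis"
begin

definition l1norm :: "real^'m \<Rightarrow> real" where
  "l1norm v = (\<Sum>i\<in>UNIV. \<bar>v $ i\<bar>)"

definition Delta_l :: "(real^'n \<Rightarrow> real^'m) \<Rightarrow> real^'n \<Rightarrow> real \<Rightarrow> real^'n \<Rightarrow> real^'n \<Rightarrow> real" where
  "Delta_l c x tau g d = - tau * (g \<bullet> d) + l1norm (c x)"

definition tau_trial :: "real \<Rightarrow> real^'n^'n \<Rightarrow> real^'n \<Rightarrow> real^'n \<Rightarrow> real \<Rightarrow> ereal" where
  "tau_trial sig H g d cnorm =
     (if g \<bullet> d + max (d \<bullet> (H *v d)) 0 \<le> 0 then \<infinity>
      else ereal ((1 - sig) * cnorm / (g \<bullet> d + max (d \<bullet> (H *v d)) 0)))"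

definition tau_update :: "real \<Rightarrow> real \<Rightarrow> ereal \<Rightarrow> real" where
  "tau_update eps_tau tau_prev ttrial =
     (if ereal tau_prev \<le> ttrial then tau_prev
      else min ((1 - eps_tau) * tau_prev) (real_of_ereal ttrial))"

definition phibar :: "(real^'n \<Rightarrow> 'xi \<Rightarrow> real) \<Rightarrow> (real^'n \<Rightarrow> real^'m) \<Rightarrow> real^'n \<Rightarrow> real \<Rightarrow> 'xi \<Rightarrow> real" where
  "phibar fbar c x tau xi = tau * fbar x xi + l1norm (c x)"

end

theory Submission
  imports Defs
begin

lemma l1norm_zero: "l1norm (v::real^'m) = 0 \<Longrightarrow> v = 0"
  unfolding l1norm_def
  by (simp add: sum_nonneg_eq_0_iff vec_eq_iff)

lemma l1norm_nonneg: "l1norm (v::real^'m) \<ge> 0"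
  unfolding l1norm_def by (simp add: sum_nonneg)

lemma step_lemma:
  fixes g d :: "real^'n" and H :: "real^'n^'n"
  assumes prev: "prev > 0" and cn: "cn \<ge> 0"
    and cz: "cn = 0 \<Longrightarrow> g \<bullet> d + max (d \<bullet> (H *v d)) 0 \<le> 0"
    and t: "t = tau_update eps prev (tau_trial sig H g d cn)"
    and sig: "0 < sig" "sig < 1" and eps: "0 < eps" "eps < 1"
  shows "- t * (g \<bullet> d) + cn \<ge> t * max (d \<bullet> (H *v d)) 0 + sig * cn
     \<and> 0 < t \<and> (t \<noteq> prev \<longrightarrow> t \<le> (1 - eps) * prev)"
proof (cases "g \<bullet> d + max (d \<bullet> (H *v d)) 0 \<le> 0")
  case True
  then have "t = prev" using t by (simp add: tau_update_def tau_trial_def)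
  moreover have "- prev * (g \<bullet> d) \<ge> prev * max (d \<bullet> (H *v d)) 0"
  proof -
    have "prev * max (d \<bullet> (H *v d)) 0 \<le> prev * (- (g \<bullet> d))"
      using True prev by (intro mult_left_mono) auto
    then show ?thesis by simp
  qed
  moreover have "cn \<ge> sig * cn" using sig cn by (simp add: mult_left_le_one_le)
  ultimately show ?thesis using prev by simp
next
  case False
  define s where "s = g \<bullet> d + max (d \<bullet> (H *v d)) 0"
  have sp: "s > 0" using False s_def by simp
  have cnp: "cn > 0" using cz False cn by force
  define tr where "tr = (1 - sig) * cn / s"
  have trp: "tr > 0" using sp cnp sig tr_def by simp
  have tt: "tau_trial sig H g d cn = ereal tr" using False by (simp add: tau_trial_def tr_def s_def)
  have tle: "t \<le> tr \<and> 0 < t \<and> (t \<noteq> prev \<longrightarrow> t \<le> (1 - eps) * prev)"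
  proof (cases "prev \<le> tr")
    case True
    then show ?thesis using t tt prev by (simp add: tau_update_def)
  next
    case False
    then have "t = min ((1 - eps) * prev) tr" using t tt by (simp add: tau_update_def)
    then show ?thesis using trp prev eps by auto
  qed
  have "t * s \<le> (1 - sig) * cn"
    using tle sp tr_def by (simp add: pos_le_divide_eq)
  then show ?thesis using tle unfolding s_def by (simp add: algebra_simps)
qed

theorem lemma3p11:
  fixes f :: "real^'n \<Rightarrow> real" and grad_f :: "real^'n \<Rightarrow> real^'n"
    and c :: "real^'n \<Rightarrow> real^'m" and Jc :: "real^'n \<Rightarrow> real^'n^'m"
    and X :: "(real^'n) set"
    and fbar :: "real^'n \<Rightarrow> 'xi \<Rightarrow> real" and xi0 xiplus :: "nat \<Rightarrow> 'xi"
    and x gbar d :: "nat \<Rightarrow> real^'n" and y :: "nat \<Rightarrow> real^'m"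
    and H :: "nat \<Rightarrow> real^'n^'n"
    and tau alpha :: "nat \<Rightarrow> real"
    and tau_m1 alpha_max eps_f gamma theta sig eps_tau L kappa_H zeta :: real
  assumes m_le_n: "CARD('m) \<le> CARD('n)"
    \<comment> \<open>f, c continuously differentiable, with gradient of f and Jacobian of c\<close>
    and f_deriv: "\<And>z. (f has_derivative (\<lambda>h. grad_f z \<bullet> h)) (at z)"
    and c_deriv: "\<And>z. (c has_derivative (\<lambda>h. Jc z *v h)) (at z)"
    and grad_f_cont: "continuous_on UNIV grad_f"
    and Jc_cont: "continuous_on UNIV Jc"
    \<comment> \<open>algorithm parameters\<close>
    and tau_m1_pos: "tau_m1 > 0"
    and alpha_max: "0 < alpha_max" "alpha_max \<le> 1"
    and alpha0: "0 < alpha 0" "alpha 0 \<le> alpha_max"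
    and eps_f: "eps_f \<ge> 0"
    and gamma: "0 < gamma" "gamma < 1"
    and theta: "0 < theta" "theta < 1"
    and sig: "0 < sig" "sig < 1"
    and eps_tau: "0 < eps_tau" "eps_tau < 1"
    \<comment> \<open>Algorithm SS-SQP: linear system\<close>
    and sys1: "\<And>k. H k *v d k + transpose (Jc (x k)) *v y k = - gbar k"
    and sys2: "\<And>k. Jc (x k) *v d k = - c (x k)"
    \<comment> \<open>merit parameter update (tau_{-1} = tau_m1)\<close>
    and tau_rule: "\<And>k. tau k = tau_update eps_tau (if k = 0 then tau_m1 else tau (k - 1))
                          (tau_trial sig (H k) (gbar k) (d k) (l1norm (c (x k))))"
    \<comment> \<open>step acceptance test\<close>
    and step_rule: "\<And>k.
       (phibar fbar c (x k + alpha k *\<^sub>R d k) (tau k) (xiplus k)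
          \<le> phibar fbar c (x k) (tau k) (xi0 k)
             - alpha k * theta * Delta_l c (x k) (tau k) (gbar k) (d k) + 2 * tau k * eps_f
        \<longrightarrow> x (Suc k) = x k + alpha k *\<^sub>R d k \<and> alpha (Suc k) = min alpha_max (alpha k / gamma))
     \<and> (\<not> phibar fbar c (x k + alpha k *\<^sub>R d k) (tau k) (xiplus k)
          \<le> phibar fbar c (x k) (tau k) (xi0 k)
             - alpha k * theta * Delta_l c (x k) (tau k) (gbar k) (d k) + 2 * tau k * eps_f
        \<longrightarrow> x (Suc k) = x k \<and> alpha (Suc k) = gamma * alpha k)"
    \<comment> \<open>(A1)\<close>
    and X_open: "open X" and X_convex: "convex X"
    and X_iter: "\<And>k. x k \<in> X" and X_trial: "\<And>k. x k + alpha k *\<^sub>R d k \<in> X"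
    and f_bdd_below: "bdd_below (f ` X)"
    and grad_f_lip: "L-lipschitz_on X grad_f"
    and grad_f_bdd: "bounded (grad_f ` X)"
    and c_bdd: "bounded (c ` X)"
    and grad_ci_lip: "\<And>i. \<exists>Li. Li-lipschitz_on X (\<lambda>z. Jc z $ i)"
    and grad_ci_bdd: "\<And>i. bounded ((\<lambda>z. Jc z $ i) ` X)"
    and sing_vals: "\<exists>kappa>0. \<forall>z\<in>X. \<forall>v. kappa * norm v \<le> norm (transpose (Jc z) *v v)"
    \<comment> \<open>(A2)\<close>
    and kappa_H: "kappa_H > 0" and zeta: "zeta > 0"
    and H_sym: "\<And>k. transpose (H k) = H k"
    and H_bdd: "\<And>k. onorm (\<lambda>v. H k *v v) \<le> kappa_H"
    and H_curv: "\<And>k u. Jc (x k) *v u = 0 \<Longrightarrow> u \<bullet> (H k *v u) \<ge> zeta * (norm u)\<^sup>2"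
  shows "\<forall>k. Delta_l c (x k) (tau k) (gbar k) (d k)
               \<ge> tau k * max (d k \<bullet> (H k *v d k)) 0 + sig * l1norm (c (x k))
           \<and> (tau k \<noteq> (if k = 0 then tau_m1 else tau (k - 1))
               \<longrightarrow> 0 < tau k \<and> tau k \<le> (1 - eps_tau) * (if k = 0 then tau_m1 else tau (k - 1)))"
proof -
  have czero: "\<And>k. l1norm (c (x k)) = 0 \<Longrightarrow> gbar k \<bullet> d k + max (d k \<bullet> (H k *v d k)) 0 \<le> 0"
  proof -
    fix k assume "l1norm (c (x k)) = 0"
    then have c0: "c (x k) = 0" by (rule l1norm_zero)
    then have Jd: "Jc (x k) *v d k = 0" using sys2[of k] by simp
    have cur: "d k \<bullet> (H k *v d k) \<ge> 0"
      using H_curv[OF Jd] zeta by (smt (verit) zero_le_power2 mult_nonneg_nonneg)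
    have "d k \<bullet> (transpose (Jc (x k)) *v y k) = 0"
      by (metis Jd dot_lmul_matrix inner_commute inner_zero_right transpose_matrix_vector)
    then have "d k \<bullet> (H k *v d k) = - (gbar k \<bullet> d k)"
      using arg_cong[OF sys1[of k], of "\<lambda>v. d k \<bullet> v"]
      by (simp add: inner_add_right inner_commute)
    then show "gbar k \<bullet> d k + max (d k \<bullet> (H k *v d k)) 0 \<le> 0" using cur by simp
  qed
  have main: "\<And>k. (if k = 0 then tau_m1 else tau (k - 1)) > 0 \<Longrightarrow>
      - tau k * (gbar k \<bullet> d k) + l1norm (c (x k)) \<ge> tau k * max (d k \<bullet> (H k *v d k)) 0 + sig * l1norm (c (x k))
     \<and> 0 < tau k \<and> (tau k \<noteq> (if k = 0 then tau_m1 else tau (k - 1)) \<longrightarrow> tau k \<le> (1 - eps_tau) * (if k = 0 then tau_m1 else tau (k - 1)))"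
    by (rule step_lemma[OF _ l1norm_nonneg czero tau_rule sig eps_tau])
  have pos: "\<And>k. (if k = 0 then tau_m1 else tau (k - 1)) > 0"
  proof -
    fix k show "(if k = 0 then tau_m1 else tau (k - 1)) > 0"
    proof (induction k)
      case 0 then show ?case using tau_m1_pos by simp
    next
      case (Suc k) then show ?case using main[of k] by simp
    qed
  qed
  show ?thesis using main pos by (simp add: Delta_l_def)
qed

end
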